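(* Fix a positive integer $N$ and nonzero real constants $W_S,W_T$. The map $\Gamma:(T^*D\times\mathbb{R}^2)^N\to\mathfrak p^*$, $$(\bm q^i,\bm p^i,S^{*i}_0,T^{*i}_0)_{i=1}^N\mapsto\Big(\sum_{i=1}^N\bm p^i\otimes\delta(\bm x-\bm q^i)\,dx\wedge dy,\ W_S\sum_{i=1}^NS^{*i}_0\,\delta(\bm x-\bm q^i)\,dx\wedge dy,\ W_T\sum_{i=1}^NT^{*i}_0\,\delta(\bm x-\bm q^i)\,dx\wedge dy\Big)$$ is a Poisson map, where $T^*D\times\mathbb{R}^2$ is the product of the canonical symplectic manifold $T^*D$ with the trivial Poisson manifold $\mathbb{R}^2$ (and $(T^*D\times\mathbb{R}^2)^N$ has the product structure), and $\mathfrak p^*$ carries its Lie–Poisson structure.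
   Context: $D$ is the closed unit disc with coordinates $(x,y)$, $\bm x=(x,y)$. Lie algebra $\mathfrak p$: triples $X=(\bm U,S,T)$ with $S,T$ smooth functions on $D$ and $\bm U$ a vector field on $D$ with $xU^x+yU^y=0$ on $\partial D$; bracket $[X_1,X_2]=-([\bm U_1,\bm U_2],\mathcal L_{\bm U_1}S_2-\mathcal L_{\bm U_2}S_1,\mathcal L_{\bm U_1}T_2-\mathcal L_{\bm U_2}T_1)$. Dual $\mathfrak p^*$: triples $X^*=(\bm U^*,S^*,T^* )$ with $S^*=\sigma\,dx\wedge dy$, $T^*=\tau\,dx\wedge dy$ distributional 2-forms and $\bm U^*=(U_xdx+U_ydy)\otimes(dx\wedge dy)$ a distributional 1-form density (with tangential boundary condition $xU_x+yU_y=0$ on $\partial D$); pairing $\langle X^*,X\rangle=\int_D(U_iU^i+\sigma S+\tau T)\,dx\,dy$; functional derivative $\delta F/\delta X^*\in\mathfrak p$ defined by $\frac{d}{d\lambda}|_0F(X^*+\lambda\delta X^* )=\langle\delta X^*,\delta F/\delta X^*\rangle$; Lie–Poisson bracket $\{F,G\}(X^* )=\langle X^*,[\delta F/\delta X^*,\delta G/\delta X^*]\rangle$. On $T^*D\times\mathbb{R}^2\ni(\bm q,\bm p,S_0^*,T_0^* )$ the bracket is $\{f,g\}=\partial_{\bm q}f\cdot\partial_{\bm p}g-\partial_{\bm q}g\cdot\partial_{\bm p}f$; for $\bm q\in\partial D$, momentum is defined modulo vectors normal to $\partial D$. *)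

theory Defs
  imports "HOL-Analysis.Analysis"
begin

type_synonym pt = "real^2"

definition D :: "pt set" where "D = cball 0 1"

definition pdiff :: "2 \<Rightarrow> (pt \<Rightarrow> real) \<Rightarrow> pt \<Rightarrow> real" where
  "pdiff i f x = frechet_derivative f (at x) (axis i 1)"

definition smooth_on :: "pt set \<Rightarrow> (pt \<Rightarrow> real) \<Rightarrow> bool" where
  "smooth_on S f \<longleftrightarrow> (\<forall>is. (fold pdiff is f) differentiable_on S)"

definition smooth_D :: "(pt \<Rightarrow> real) \<Rightarrow> bool" where
  "smooth_D f \<longleftrightarrow> (\<exists>S g. open S \<and> D \<subseteq> S \<and> smooth_on S g \<and> (\<forall>x\<in>D. f x = g x))
                  \<and> (\<forall>x. x \<notin> D \<longrightarrow> f x = 0)"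

type_synonym pelem = "(pt \<Rightarrow> pt) \<times> (pt \<Rightarrow> real) \<times> (pt \<Rightarrow> real)"

definition in_p :: "pelem \<Rightarrow> bool" where
  "in_p X = (case X of (U, S, T) \<Rightarrow>
     (\<forall>j. smooth_D (\<lambda>x. U x $ j)) \<and> smooth_D S \<and> smooth_D T \<and>
     (\<forall>x. norm x = 1 \<longrightarrow> x \<bullet> U x = 0))"

text \<open>Derivative on D (within D, so meaningful up to the boundary).\<close>
definition dD :: "(pt \<Rightarrow> 'b::real_normed_vector) \<Rightarrow> pt \<Rightarrow> pt \<Rightarrow> 'b" where
  "dD f x v = frechet_derivative f (at x within D) v"

definition vbr :: "(pt \<Rightarrow> pt) \<Rightarrow> (pt \<Rightarrow> pt) \<Rightarrow> pt \<Rightarrow> pt" where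
  "vbr U1 U2 x = dD U2 x (U1 x) - dD U1 x (U2 x)"

definition lieD :: "(pt \<Rightarrow> pt) \<Rightarrow> (pt \<Rightarrow> real) \<Rightarrow> pt \<Rightarrow> real" where
  "lieD U S x = dD S x (U x)"

definition pbr :: "pelem \<Rightarrow> pelem \<Rightarrow> pelem" where
  "pbr X1 X2 = (case X1 of (U1, S1, T1) \<Rightarrow> case X2 of (U2, S2, T2) \<Rightarrow>
     ((\<lambda>x. if x \<in> D then - vbr U1 U2 x else 0),
      (\<lambda>x. if x \<in> D then - (lieD U1 S2 x - lieD U2 S1 x) else 0),
      (\<lambda>x. if x \<in> D then - (lieD U1 T2 x - lieD U2 T1 x) else 0)))"

definition plin :: "real \<Rightarrow> pelem \<Rightarrow> real \<Rightarrow> pelem \<Rightarrow> pelem" where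
  "plin a X b Y = (case X of (U1, S1, T1) \<Rightarrow> case Y of (U2, S2, T2) \<Rightarrow>
     ((\<lambda>x. a *\<^sub>R U1 x + b *\<^sub>R U2 x), (\<lambda>x. a * S1 x + b * S2 x), (\<lambda>x. a * T1 x + b * T2 x)))"

type_synonym pstar = "pelem \<Rightarrow> real"

definition in_pstar :: "pstar \<Rightarrow> bool" where
  "in_pstar Xs \<longleftrightarrow>
     (\<forall>X Y a b. in_p X \<longrightarrow> in_p Y \<longrightarrow> Xs (plin a X b Y) = a * Xs X + b * Xs Y) \<and>
     (\<forall>X. \<not> in_p X \<longrightarrow> Xs X = 0)"

definition wcurve :: "real set \<Rightarrow> (real \<Rightarrow> pstar) \<Rightarrow> (real \<Rightarrow> pstar) \<Rightarrow> bool" where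
  "wcurve I c c' \<longleftrightarrow> (\<forall>\<mu>\<in>I. in_pstar (c \<mu>) \<and> in_pstar (c' \<mu>)) \<and>
     (\<forall>\<mu>\<in>I. \<forall>X. in_p X \<longrightarrow> ((\<lambda>\<nu>. c \<nu> X) has_real_derivative c' \<mu> X) (at \<mu> within I))"

definition has_fderiv :: "(pstar \<Rightarrow> real) \<Rightarrow> (pstar \<Rightarrow> pelem) \<Rightarrow> bool" where
  "has_fderiv F dF \<longleftrightarrow> (\<forall>Xs. in_pstar Xs \<longrightarrow> in_p (dF Xs)) \<and>
     (\<forall>I c c' \<mu>. wcurve I c c' \<longrightarrow> \<mu> \<in> I \<longrightarrow>
        ((\<lambda>\<nu>. F (c \<nu>)) has_real_derivative c' \<mu> (dF (c \<mu>))) (at \<mu> within I))"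

definition lp_br :: "(pstar \<Rightarrow> pelem) \<Rightarrow> (pstar \<Rightarrow> pelem) \<Rightarrow> pstar \<Rightarrow> real" where
  "lp_br dF dG Xs = Xs (pbr (dF Xs) (dG Xs))"

definition Gamma :: "nat \<Rightarrow> real \<Rightarrow> real \<Rightarrow> (nat \<Rightarrow> pt) \<Rightarrow> (nat \<Rightarrow> pt) \<Rightarrow> (nat \<Rightarrow> real)
    \<Rightarrow> (nat \<Rightarrow> real) \<Rightarrow> pstar" where
  "Gamma N WS WT q p s t = (\<lambda>X. if in_p X then (case X of (U, S, T) \<Rightarrow>
      (\<Sum>i<N. p i \<bullet> U (q i) + WS * s i * S (q i) + WT * t i * T (q i))) else 0)"

type_synonym phasefun = "(nat \<Rightarrow> pt) \<Rightarrow> (nat \<Rightarrow> pt) \<Rightarrow> (nat \<Rightarrow> real) \<Rightarrow> (nat \<Rightarrow> real) \<Rightarrow> real"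

definition grad_q :: "phasefun \<Rightarrow> nat \<Rightarrow> (nat \<Rightarrow> pt) \<Rightarrow> (nat \<Rightarrow> pt) \<Rightarrow> (nat \<Rightarrow> real)
    \<Rightarrow> (nat \<Rightarrow> real) \<Rightarrow> pt" where
  "grad_q f i q p s t =
     (\<chi> j. frechet_derivative (\<lambda>v. f (q(i := v)) p s t) (at (q i) within D) (axis j 1))"

definition grad_p :: "phasefun \<Rightarrow> nat \<Rightarrow> (nat \<Rightarrow> pt) \<Rightarrow> (nat \<Rightarrow> pt) \<Rightarrow> (nat \<Rightarrow> real)
    \<Rightarrow> (nat \<Rightarrow> real) \<Rightarrow> pt" where
  "grad_p f i q p s t =
     (\<chi> j. frechet_derivative (\<lambda>v. f q (p(i := v)) s t) (at (p i)) (axis j 1))"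

text \<open>Canonical bracket on (T*D)^N times the trivial bracket on (R^2)^N.\<close>
definition phase_br :: "nat \<Rightarrow> phasefun \<Rightarrow> phasefun \<Rightarrow> (nat \<Rightarrow> pt) \<Rightarrow> (nat \<Rightarrow> pt)
    \<Rightarrow> (nat \<Rightarrow> real) \<Rightarrow> (nat \<Rightarrow> real) \<Rightarrow> real" where
  "phase_br N f g q p s t = (\<Sum>i<N. grad_q f i q p s t \<bullet> grad_p g i q p s t
                                  - grad_q g i q p s t \<bullet> grad_p f i q p s t)"

definition phase_diff :: "nat \<Rightarrow> phasefun \<Rightarrow> (nat \<Rightarrow> pt) \<Rightarrow> (nat \<Rightarrow> pt)
    \<Rightarrow> (nat \<Rightarrow> real) \<Rightarrow> (nat \<Rightarrow> real) \<Rightarrow> bool" where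
  "phase_diff N f q p s t \<longleftrightarrow> (\<forall>i<N.
     (\<lambda>v. f (q(i := v)) p s t) differentiable (at (q i) within D) \<and>
     (\<lambda>v. f q (p(i := v)) s t) differentiable (at (p i)))"

end

theory Submission
  imports Defs
begin

lemma pdiff_local:
  assumes "open S" "x \<in> S" "\<forall>y\<in>S. f y = g y"
  shows "pdiff i f x = pdiff i g x"
proof -
  have "(f has_derivative L) (at x) = (g has_derivative L) (at x)" for L
    using has_derivative_transform_within_open[of f L x UNIV S g]
      has_derivative_transform_within_open[of g L x UNIV S f] assms by auto
  then show ?thesis unfolding pdiff_def frechet_derivative_def by simp
qed

lemma fold_pdiff_local:
  assumes "open S" "\<forall>y\<in>S. f y = g y"
  shows "\<forall>y\<in>S. fold pdiff is f y = fold pdiff is g y"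
  using assms(2)
proof (induction "is" arbitrary: f g)
  case Nil then show ?case by simp
next
  case (Cons i "is")
  have "\<forall>y\<in>S. pdiff i f y = pdiff i g y"
    using pdiff_local[OF assms(1)] Cons.prems by blast
  from Cons.IH[OF this] show ?case by simp
qed

lemma diff_on_local:
  assumes "open S" "\<forall>y\<in>S. f y = g y" "g differentiable_on S"
  shows "f differentiable_on S"
  using assms unfolding differentiable_on_eq_differentiable_at[OF assms(1)] differentiable_def
  by (metis has_derivative_transform_within_open)

lemma smooth_coind:
  assumes S: "open S"
    and d: "\<And>f. P f \<Longrightarrow> f differentiable_on S"
    and st: "\<And>f i. P f \<Longrightarrow> \<exists>h. P h \<and> (\<forall>x\<in>S. pdiff i f x = h x)"
    and P: "P f"
  shows "smooth_on S f"
proof -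
  have "\<forall>f. P f \<longrightarrow> (\<exists>h. P h \<and> (\<forall>x\<in>S. fold pdiff is f x = h x))" for "is"
  proof (induction "is")
    case Nil then show ?case by auto
  next
    case (Cons i "is")
    show ?case
    proof (intro allI impI)
      fix f assume "P f"
      then obtain h1 where h1: "P h1" "\<forall>x\<in>S. pdiff i f x = h1 x" using st by blast
      then obtain h where h: "P h" "\<forall>x\<in>S. fold pdiff is h1 x = h x" using Cons.IH by blast
      have "\<forall>x\<in>S. fold pdiff is (pdiff i f) x = fold pdiff is h1 x"
        using fold_pdiff_local[OF S h1(2)] .
      then show "\<exists>h. P h \<and> (\<forall>x\<in>S. fold pdiff (i # is) f x = h x)"
        using h by auto
    qed
  qed
  then show ?thesis unfolding smooth_on_def
    using P d diff_on_local[OF S] by metis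
qed

lemma smooth_pdiff: "smooth_on S f \<Longrightarrow> smooth_on S (pdiff i f)"
  unfolding smooth_on_def by (metis fold_Cons comp_apply)

lemma smooth_diff_at: "smooth_on S f \<Longrightarrow> open S \<Longrightarrow> x \<in> S \<Longrightarrow> f differentiable (at x)"
  unfolding smooth_on_def
  by (metis fold_Nil id_apply differentiable_on_eq_differentiable_at)

lemma smooth_has_deriv: "smooth_on S f \<Longrightarrow> open S \<Longrightarrow> x \<in> S \<Longrightarrow>
   (f has_derivative frechet_derivative f (at x)) (at x)"
  using smooth_diff_at frechet_derivative_works by blast

lemma pdiff_eq: "(f has_derivative f') (at x) \<Longrightarrow> pdiff i f x = f' (axis i 1)"
  unfolding pdiff_def using frechet_derivative_at by metis

lemma sumprod_deriv:
  assumes "open S" "x \<in> S" "\<forall>(g,h)\<in>set L. smooth_on S g \<and> smooth_on S h"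
  shows "((\<lambda>y. \<Sum>(g,h)\<leftarrow>L. g y * h y) has_derivative
     (\<lambda>v. \<Sum>(g,h)\<leftarrow>L. g x * frechet_derivative h (at x) v + frechet_derivative g (at x) v * h x)) (at x)"
  using assms(3)
proof (induction L)
  case Nil then show ?case by simp
next
  case (Cons a L)
  obtain g h where a: "a = (g,h)" by force
  have g: "(g has_derivative frechet_derivative g (at x)) (at x)"
   and h: "(h has_derivative frechet_derivative h (at x)) (at x)"
    using Cons.prems a smooth_has_deriv[OF _ assms(1,2)] by auto
  have "((\<lambda>y. g y * h y) has_derivative
     (\<lambda>v. g x * frechet_derivative h (at x) v + frechet_derivative g (at x) v * h x)) (at x)"
    using has_derivative_mult[OF g h] .
  from has_derivative_add[OF this Cons.IH] Cons.prems show ?case by (simp add: a)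
qed

definition SP :: "pt set \<Rightarrow> (pt \<Rightarrow> real) \<Rightarrow> bool" where
  "SP S f \<longleftrightarrow> (\<exists>L. (\<forall>(g,h)\<in>set L. smooth_on S g \<and> smooth_on S h) \<and>
      (\<forall>x\<in>S. f x = (\<Sum>(g,h)\<leftarrow>L. g x * h x)))"

lemma SP_smooth:
  assumes S: "open S" and "SP S f" shows "smooth_on S f"
proof (rule smooth_coind[where P="SP S", OF S _ _ assms(2)])
  fix f assume "SP S f"
  then obtain L where L: "\<forall>(g,h)\<in>set L. smooth_on S g \<and> smooth_on S h"
     "\<forall>x\<in>S. f x = (\<Sum>(g,h)\<leftarrow>L. g x * h x)" unfolding SP_def by blast
  show "f differentiable_on S"
    using diff_on_local[OF S L(2)] sumprod_deriv[OF S _ L(1)]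
    by (simp add: differentiable_on_eq_differentiable_at[OF S] differentiable_def) blast
next
  fix f i assume "SP S f"
  then obtain L where L: "\<forall>(g,h)\<in>set L. smooth_on S g \<and> smooth_on S h"
     "\<forall>x\<in>S. f x = (\<Sum>(g,h)\<leftarrow>L. g x * h x)" unfolding SP_def by blast
  define L' where "L' = map (\<lambda>(g,h). (g, pdiff i h)) L @ map (\<lambda>(g,h). (pdiff i g, h)) L"
  define h where "h = (\<lambda>x. \<Sum>(g,h)\<leftarrow>L'. g x * h x)"
  have "SP S h" unfolding SP_def h_def
    by (rule exI[of _ L']) (use L(1) smooth_pdiff in \<open>auto simp: L'_def\<close>)
  moreover have "\<forall>x\<in>S. pdiff i f x = h x"
  proof
    fix x assume x: "x \<in> S"
    have "pdiff i f x = pdiff i (\<lambda>y. \<Sum>(g,h)\<leftarrow>L. g y * h y) x"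
      using pdiff_local[OF S x L(2)] .
    also have "\<dots> = (\<Sum>(g,h)\<leftarrow>L. g x * pdiff i h x + pdiff i g x * h x)"
      using pdiff_eq[OF sumprod_deriv[OF S x L(1)]] unfolding pdiff_def
      by (simp add: case_prod_unfold)
    also have "\<dots> = h x" unfolding h_def L'_def
      by (simp add: sum_list_addf case_prod_unfold comp_def)
    finally show "pdiff i f x = h x" .
  qed
  ultimately show "\<exists>h. SP S h \<and> (\<forall>x\<in>S. pdiff i f x = h x)" by blast
qed

lemma smooth_const: "smooth_on S (\<lambda>x. c)"
proof -
  have "fold pdiff is (\<lambda>x. c) = (\<lambda>x. if is = [] then c else 0)" for "is"
  proof (induction "is" arbitrary: c)
    case Nil then show ?case by simp
  next
    case (Cons i "is")
    have "pdiff i (\<lambda>x. c) = (\<lambda>x. 0)" unfolding pdiff_def by (simp add: frechet_derivative_const)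
    then show ?case using Cons.IH[of 0] by simp
  qed
  then show ?thesis unfolding smooth_on_def by simp
qed

lemma smooth_mult: "open S \<Longrightarrow> smooth_on S f \<Longrightarrow> smooth_on S g \<Longrightarrow> smooth_on S (\<lambda>x. f x * g x)"
  by (rule SP_smooth) (auto simp: SP_def intro!: exI[of _ "[(f,g)]"])

lemma smooth_add: "open S \<Longrightarrow> smooth_on S f \<Longrightarrow> smooth_on S g \<Longrightarrow> smooth_on S (\<lambda>x. f x + g x)"
  by (rule SP_smooth) (auto simp: SP_def smooth_const intro!: exI[of _ "[(f,\<lambda>x. 1),(g,\<lambda>x. 1)]"])

lemma smooth_cmult: "open S \<Longrightarrow> smooth_on S f \<Longrightarrow> smooth_on S (\<lambda>x. c * f x)"
  using smooth_mult[OF _ smooth_const] by blast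

lemma smooth_minus: "open S \<Longrightarrow> smooth_on S f \<Longrightarrow> smooth_on S (\<lambda>x. - f x)"
  using smooth_cmult[of S f "-1"] by simp

lemma smooth_diff: "open S \<Longrightarrow> smooth_on S f \<Longrightarrow> smooth_on S g \<Longrightarrow> smooth_on S (\<lambda>x. f x - g x)"
  using smooth_add[OF _ _ smooth_minus, of S f g] by simp

lemma smooth_sum: assumes "open S" "finite K" "\<And>k. k \<in> K \<Longrightarrow> smooth_on S (f k)"
  shows "smooth_on S (\<lambda>x. \<Sum>k\<in>K. f k x)"
  using assms(2,3) by (induction K rule: finite_induct) (auto simp: smooth_const smooth_add assms(1))

lemma smooth_subset: "smooth_on S f \<Longrightarrow> T \<subseteq> S \<Longrightarrow> smooth_on T f"
  unfolding smooth_on_def using differentiable_on_subset by blast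

lemma D_dir_unique:
  fixes f :: "pt \<Rightarrow> 'b::real_normed_vector"
  assumes x: "x \<in> D" and z: "z \<in> D"
    and A: "(f has_derivative A) (at x within D)" and B: "(f has_derivative B) (at x within D)"
  shows "A (z - x) = B (z - x)"
proof -
  define \<gamma> where "\<gamma> = (\<lambda>d::real. x + d *\<^sub>R (z - x))"
  have sub: "\<gamma> ` {0..1} \<subseteq> D"
  proof
    fix y assume "y \<in> \<gamma> ` {0..1}"
    then obtain d where d: "d \<in> {0..1}" "y = \<gamma> d" by auto
    have "y = (1 - d) *\<^sub>R x + d *\<^sub>R z" using d by (simp add: \<gamma>_def algebra_simps)
    moreover have "convex D" unfolding D_def by (rule convex_cball)
    ultimately show "y \<in> D" using d x z by (auto intro: convexD)
  qed
  have g: "(\<gamma> has_derivative (\<lambda>d. d *\<^sub>R (z - x))) (at 0 within {0..1})"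
    unfolding \<gamma>_def by (auto intro!: derivative_eq_intros)
  have g0: "\<gamma> 0 = x" by (simp add: \<gamma>_def)
  have "((f \<circ> \<gamma>) has_derivative (A \<circ> (\<lambda>d. d *\<^sub>R (z - x)))) (at 0 within {0..1})"
    by (rule diff_chain_within[OF g]) (use has_derivative_subset[OF A sub] g0 in simp)
  moreover have "((f \<circ> \<gamma>) has_derivative (B \<circ> (\<lambda>d. d *\<^sub>R (z - x)))) (at 0 within {0..1})"
    by (rule diff_chain_within[OF g]) (use has_derivative_subset[OF B sub] g0 in simp)
  ultimately have "A \<circ> (\<lambda>d. d *\<^sub>R (z - x)) = B \<circ> (\<lambda>d. d *\<^sub>R (z - x))"
    using frechet_derivative_unique_within_closed_interval[of "0::real" 1 0]
    by (simp add: cbox_interval)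
  from fun_cong[OF this, of 1] show ?thesis by simp
qed

lemma D_unique:
  fixes f :: "pt \<Rightarrow> 'b::real_normed_vector"
  assumes x: "x \<in> D"
    and A: "(f has_derivative A) (at x within D)" and B: "(f has_derivative B) (at x within D)"
  shows "A = B"
proof (rule linear_eq_stdbasis)
  show "linear A" "linear B" using A B has_derivative_linear by blast+
  fix b :: pt assume b: "b \<in> Basis"
  have nx: "norm x \<le> 1" using x by (simp add: D_def)
  have z1: "(1/2) *\<^sub>R x + (1/2) *\<^sub>R b \<in> D"
  proof -
    have "norm ((1/2) *\<^sub>R x + (1/2) *\<^sub>R b) \<le> norm ((1/2) *\<^sub>R x) + norm ((1/2) *\<^sub>R b)"
      by (rule norm_triangle_ineq)
    also have "\<dots> \<le> 1" using nx b by simp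
    finally show ?thesis by (simp add: D_def)
  qed
  have z2: "(1/2) *\<^sub>R x \<in> D" using nx by (simp add: D_def)
  have e: "b = 2 *\<^sub>R (((1/2) *\<^sub>R x + (1/2) *\<^sub>R b - x) - ((1/2) *\<^sub>R x - x))"
    by (simp add: algebra_simps)
  have la: "linear A" "linear B" using A B has_derivative_linear by blast+
  have h1: "A ((1/2) *\<^sub>R x - x) = B ((1/2) *\<^sub>R x - x)" using D_dir_unique[OF x z2 A B] .
  have "(1/2) *\<^sub>R x - x = (-1/2) *\<^sub>R x" by (simp add: vec_eq_iff)
  with h1 have "(-1/2) *\<^sub>R A x = (-1/2) *\<^sub>R B x"
    by (simp add: linear_cmul[OF la(1)] linear_cmul[OF la(2)] del: scaleR_minus_left)
  then have ax: "A x = B x" by simp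
  have h2: "A ((1/2) *\<^sub>R x + (1/2) *\<^sub>R b - x) = B ((1/2) *\<^sub>R x + (1/2) *\<^sub>R b - x)"
    using D_dir_unique[OF x z1 A B] .
  have "(1/2) *\<^sub>R x + (1/2) *\<^sub>R b - x = (1/2) *\<^sub>R b + (-1/2) *\<^sub>R x" by (simp add: vec_eq_iff)
  with h2 have "(1/2) *\<^sub>R A b + (-1/2) *\<^sub>R A x = (1/2) *\<^sub>R B b + (-1/2) *\<^sub>R B x"
    by (simp only: linear_add[OF la(1)] linear_add[OF la(2)] linear_cmul[OF la(1)] linear_cmul[OF la(2)])
  with ax show "A b = B b" by simp
qed

lemma dD_eq:
  assumes "x \<in> D" "(f has_derivative A) (at x within D)"
  shows "dD f x = A"
proof -
  have "(f has_derivative frechet_derivative f (at x within D)) (at x within D)"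
    using assms(2) frechet_derivative_works differentiableI by blast
  then show ?thesis unfolding dD_def[abs_def] using D_unique assms by blast
qed

lemma D_sub: "D \<subseteq> S \<Longrightarrow> norm x = 1 \<Longrightarrow> x \<in> S" by (auto simp: D_def)

lemma smoothD_ext:
  assumes "smooth_D f"
  obtains S g where "open S" "D \<subseteq> S" "smooth_on S g" "\<forall>x\<in>D. f x = g x" "\<forall>x. x \<notin> D \<longrightarrow> f x = 0"
  using assms unfolding smooth_D_def by blast

lemma ext_deriv:
  assumes "open S" "D \<subseteq> S" "smooth_on S g" "\<forall>x\<in>D. f x = g x" "x \<in> D"
  shows "(f has_derivative frechet_derivative g (at x)) (at x within D)"
proof -
  have "(g has_derivative frechet_derivative g (at x)) (at x)"
    using smooth_has_deriv assms by blast
  then have "(g has_derivative frechet_derivative g (at x)) (at x within D)"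
    using has_derivative_at_withinI by blast
  then show ?thesis
    by (rule has_derivative_transform_within[where d=1]) (use assms in auto)
qed

lemma smoothD_deriv:
  assumes "smooth_D f" "x \<in> D"
  shows "(f has_derivative dD f x) (at x within D)"
proof -
  obtain S g where "open S" "D \<subseteq> S" "smooth_on S g" "\<forall>x\<in>D. f x = g x"
    using smoothD_ext[OF assms(1)] by metis
  note H = ext_deriv[OF this assms(2)]
  from H dD_eq[OF assms(2) H] show ?thesis by simp
qed

lemma vec_has_deriv:
  fixes f :: "'a::real_normed_vector \<Rightarrow> real^'n"
  assumes "\<And>j. ((\<lambda>y. f y $ j) has_derivative (\<lambda>w. f' w $ j)) (at x within S)"
  shows "(f has_derivative f') (at x within S)"
proof (rule iffD2[OF has_derivative_componentwise_within], intro ballI)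
  fix i :: "real^'n" assume "i \<in> Basis"
  then obtain j where i: "i = axis j 1" using axis_inverse by metis
  have e1: "(\<lambda>x. f x \<bullet> i) = (\<lambda>x. f x $ j)" "(\<lambda>x. f' x \<bullet> i) = (\<lambda>x. f' x $ j)"
    unfolding i by (simp_all add: inner_axis)
  show "((\<lambda>x. f x \<bullet> i) has_derivative (\<lambda>x. f' x \<bullet> i)) (at x within S)"
    unfolding e1 by (rule assms)
qed

lemma lin_expand:
  assumes "linear (L :: pt \<Rightarrow> real)"
  shows "L v = (\<Sum>k\<in>UNIV. v $ k * L (axis k 1))"
proof -
  have "L v = L (\<Sum>k\<in>UNIV. v $ k *\<^sub>R axis k 1)"
    using basis_expansion[of v] by (simp add: scalar_mult_eq_scaleR)
  also have "\<dots> = (\<Sum>k\<in>UNIV. v $ k * L (axis k 1))"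
    by (simp add: linear_sum[OF assms] linear_cmul[OF assms])
  finally show ?thesis .
qed

definition hasext :: "(pt \<Rightarrow> real) \<Rightarrow> bool" where
  "hasext f \<longleftrightarrow> (\<exists>Q g. open Q \<and> D \<subseteq> Q \<and> smooth_on Q g \<and> (\<forall>x\<in>D. f x = g x))"

lemma smoothD_hasext: "smooth_D f \<Longrightarrow> hasext f"
  unfolding smooth_D_def hasext_def by blast

lemma hasext_smoothD: "hasext f \<Longrightarrow> smooth_D (\<lambda>x. if x \<in> D then f x else 0)"
  unfolding smooth_D_def hasext_def by auto

lemma hasext_lin:
  assumes "hasext f" "hasext g"
  shows "hasext (\<lambda>x. a * f x + b * g x)"
proof -
  obtain O1 g1 where 1: "open O1" "D \<subseteq> O1" "smooth_on O1 g1" "\<forall>x\<in>D. f x = g1 x"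
    using assms(1) unfolding hasext_def by blast
  obtain O2 g2 where 2: "open O2" "D \<subseteq> O2" "smooth_on O2 g2" "\<forall>x\<in>D. g x = g2 x"
    using assms(2) unfolding hasext_def by blast
  have o: "open (O1 \<inter> O2)" using 1 2 by auto
  have "smooth_on (O1 \<inter> O2) (\<lambda>x. a * g1 x + b * g2 x)"
    by (intro smooth_add smooth_cmult o smooth_subset[OF 1(3)] smooth_subset[OF 2(3)]) auto
  then show ?thesis unfolding hasext_def using 1 2 o by (intro exI[of _ "O1 \<inter> O2"]) auto
qed

lemma smoothD_lin:
  assumes "smooth_D f" "smooth_D g"
  shows "smooth_D (\<lambda>x. a * f x + b * g x)"
proof -
  have "hasext (\<lambda>x. a * f x + b * g x)" using hasext_lin smoothD_hasext assms by blast
  moreover have "\<forall>x. x \<notin> D \<longrightarrow> a * f x + b * g x = 0" using assms unfolding smooth_D_def by auto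
  ultimately show ?thesis unfolding smooth_D_def hasext_def by blast
qed

lemma in_p_plin:
  assumes "in_p X" "in_p Y" shows "in_p (plin a X b Y)"
proof -
  obtain U1 S1 T1 where X: "X = (U1,S1,T1)" by (cases X) auto
  obtain U2 S2 T2 where Y: "Y = (U2,S2,T2)" by (cases Y) auto
  have P: "plin a X b Y = ((\<lambda>x. a *\<^sub>R U1 x + b *\<^sub>R U2 x), (\<lambda>x. a * S1 x + b * S2 x), (\<lambda>x. a * T1 x + b * T2 x))"
    by (simp add: X Y plin_def)
  have A: "(\<forall>j. smooth_D (\<lambda>y. U1 y $ j)) \<and> smooth_D S1 \<and> smooth_D T1 \<and> (\<forall>x. norm x = 1 \<longrightarrow> x \<bullet> U1 x = 0)"
    using assms(1) unfolding X in_p_def by simp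
  have B: "(\<forall>j. smooth_D (\<lambda>y. U2 y $ j)) \<and> smooth_D S2 \<and> smooth_D T2 \<and> (\<forall>x. norm x = 1 \<longrightarrow> x \<bullet> U2 x = 0)"
    using assms(2) unfolding Y in_p_def by simp
  have "\<forall>j. smooth_D (\<lambda>x. (a *\<^sub>R U1 x + b *\<^sub>R U2 x) $ j)"
    using A B smoothD_lin by simp
  moreover have "smooth_D (\<lambda>x. a * S1 x + b * S2 x)" "smooth_D (\<lambda>x. a * T1 x + b * T2 x)"
    using A B smoothD_lin by blast+
  moreover have "\<forall>x. norm x = 1 \<longrightarrow> x \<bullet> (a *\<^sub>R U1 x + b *\<^sub>R U2 x) = 0"
    using A B by (simp add: inner_add_right)
  ultimately show ?thesis unfolding P in_p_def by simp
qed

lemma lie_ext: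
  assumes f: "smooth_D f" and V: "\<And>k. smooth_D (\<lambda>y. V y $ k)"
  shows "hasext (\<lambda>x. dD f x (V x))"
proof -
  obtain Of gf where F: "open Of" "D \<subseteq> Of" "smooth_on Of gf" "\<forall>x\<in>D. f x = gf x"
    using smoothD_ext[OF f] by metis
  have "\<forall>k. \<exists>Q g. open Q \<and> D \<subseteq> Q \<and> smooth_on Q g \<and> (\<forall>x\<in>D. V x $ k = g x)"
    using V unfolding smooth_D_def by blast
  then obtain Ok gk where K: "\<And>k. open (Ok k)" "\<And>k. D \<subseteq> Ok k" "\<And>k. smooth_on (Ok k) (gk k)"
     "\<And>k x. x \<in> D \<Longrightarrow> V x $ k = gk k x" by metis
  define Q where "Q = Of \<inter> (\<Inter>k. Ok k)"
  have oQ: "open Q" unfolding Q_def using F K by (intro open_Int open_INT) auto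
  have DQ: "D \<subseteq> Q" unfolding Q_def using F(2) K(2) by blast
  have QQf: "Q \<subseteq> Of" and QQk: "\<And>k. Q \<subseteq> Ok k" unfolding Q_def by auto
  define g where "g = (\<lambda>x. \<Sum>k\<in>UNIV. gk k x * pdiff k gf x)"
  have "smooth_on Q (\<lambda>x. gk k x * pdiff k gf x)" for k
    by (rule smooth_mult[OF oQ smooth_subset[OF K(3) QQk] smooth_subset[OF smooth_pdiff[OF F(3)] QQf]])
  then have "smooth_on Q g" unfolding g_def
    by (intro smooth_sum[OF oQ]) auto
  moreover have "\<forall>x\<in>D. dD f x (V x) = g x"
  proof
    fix x assume x: "x \<in> D"
    have xO: "x \<in> Of" using x F by auto
    have hd: "(gf has_derivative frechet_derivative gf (at x)) (at x)"
      using smooth_has_deriv[OF F(3) F(1) xO] .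
    have "dD f x = frechet_derivative gf (at x)"
      using dD_eq[OF x ext_deriv[OF F(1,2,3,4) x]] .
    then have "dD f x (V x) = (\<Sum>k\<in>UNIV. V x $ k * frechet_derivative gf (at x) (axis k 1))"
      using lin_expand[OF has_derivative_linear[OF hd], of "V x"] by (simp only:)
    also have "\<dots> = g x" unfolding g_def pdiff_def using K(4)[OF x] by simp
    finally show "dD f x (V x) = g x" .
  qed
  ultimately show ?thesis unfolding hasext_def using oQ DQ by blast
qed

lemma U_deriv:
  assumes "\<And>j. smooth_D (\<lambda>y. U y $ j)" "x \<in> D"
  shows "(U has_derivative dD U x) (at x within D)"
    and "\<And>w j. dD U x w $ j = dD (\<lambda>y. U y $ j) x w"
proof -
  have "(U has_derivative (\<lambda>w. \<chi> j. dD (\<lambda>y. U y $ j) x w)) (at x within D)"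
    by (rule vec_has_deriv) (use smoothD_deriv[OF assms(1) assms(2)] in simp)
  note H = this
  have E: "dD U x = (\<lambda>w. \<chi> j. dD (\<lambda>y. U y $ j) x w)" using dD_eq[OF assms(2) H] .
  show "(U has_derivative dD U x) (at x within D)" using H E by simp
  show "\<And>w j. dD U x w $ j = dD (\<lambda>y. U y $ j) x w" using E by simp
qed

lemma tang:
  assumes U: "\<And>j. smooth_D (\<lambda>y. U y $ j)" and bU: "\<And>x. norm x = 1 \<Longrightarrow> x \<bullet> U x = 0"
    and nx: "norm x = 1" and v: "x \<bullet> v = 0"
  shows "x \<bullet> dD U x v = - (v \<bullet> U x)"
proof -
  have xD: "x \<in> D" using nx by (simp add: D_def)
  note dU = U_deriv(1)[OF U xD]
  have lin: "linear (dD U x)" using has_derivative_linear[OF dU] .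
  define dphi where "dphi = (\<lambda>h. x \<bullet> dD U x h + h \<bullet> U x)"
  have phi: "((\<lambda>y. y \<bullet> U y) has_derivative dphi) (at x within D)"
    unfolding dphi_def using has_derivative_inner[OF has_derivative_ident dU] by simp
  have "dphi v = 0"
  proof (cases "v = 0")
    case True then show ?thesis by (simp add: dphi_def linear_0[OF lin])
  next
    case False
    define w where "w = v /\<^sub>R norm v"
    have nw: "norm w = 1" using False by (simp add: w_def)
    have xw: "x \<bullet> w = 0" using v by (simp add: w_def)
    define \<gamma> where "\<gamma> = (\<lambda>\<theta>::real. cos \<theta> *\<^sub>R x + sin \<theta> *\<^sub>R w)"
    have ng: "norm (\<gamma> \<theta>) = 1" for \<theta>
    proof -
      have "\<gamma> \<theta> \<bullet> \<gamma> \<theta> = (cos \<theta>)\<^sup>2 * (x \<bullet> x) + 2 * cos \<theta> * sin \<theta> * (x \<bullet> w) + (sin \<theta>)\<^sup>2 * (w \<bullet> w)"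
        unfolding \<gamma>_def by (simp add: inner_add_left inner_add_right inner_commute power2_eq_square algebra_simps)
      also have "\<dots> = 1"
      proof -
        have "x \<bullet> x = 1" "w \<bullet> w = 1" using nx nw by (simp_all add: norm_eq_1)
        then show ?thesis using xw sin_cos_squared_add[of \<theta>] by simp
      qed
      finally show ?thesis by (simp add: norm_eq_1)
    qed
    have gD: "\<gamma> ` UNIV \<subseteq> D" using ng by (auto simp: D_def)
    have g0: "\<gamma> 0 = x" by (simp add: \<gamma>_def)
    have dg: "(\<gamma> has_derivative (\<lambda>h. h *\<^sub>R w)) (at 0)"
    proof -
      have "(\<gamma> has_derivative (\<lambda>h. h *\<^sub>R (- sin 0 *\<^sub>R x + cos 0 *\<^sub>R w))) (at 0)"
        unfolding \<gamma>_def
        by (auto intro!: derivative_eq_intros simp: algebra_simps)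
      then show ?thesis by simp
    qed
    have "(((\<lambda>y. y \<bullet> U y) \<circ> \<gamma>) has_derivative (dphi \<circ> (\<lambda>h. h *\<^sub>R w))) (at 0 within UNIV)"
      by (rule diff_chain_within[OF dg]) (use has_derivative_subset[OF phi gD] g0 in simp)
    moreover have "(\<lambda>y. y \<bullet> U y) \<circ> \<gamma> = (\<lambda>_. 0)" using bU ng by (auto simp: comp_def)
    ultimately have "((\<lambda>_. 0) has_derivative (dphi \<circ> (\<lambda>h. h *\<^sub>R w))) (at (0::real))" by simp
    then have "dphi \<circ> (\<lambda>h. h *\<^sub>R w) = (\<lambda>_. 0)"
      using has_derivative_unique has_derivative_const by blast
    from fun_cong[OF this, of "norm v"] show ?thesis using False by (simp add: w_def)
  qed
  then show ?thesis by (simp add: dphi_def inner_commute)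
qed

lemma smoothD_from_ext:
  assumes "hasext A" "hasext B" "\<And>x. x \<in> D \<Longrightarrow> f x = - A x + B x" "\<And>x. x \<notin> D \<Longrightarrow> f x = 0"
  shows "smooth_D f"
proof -
  have "smooth_D (\<lambda>x. if x \<in> D then (-1) * A x + 1 * B x else 0)"
    by (rule hasext_smoothD[OF hasext_lin[OF assms(1,2)]])
  moreover have "(\<lambda>x. if x \<in> D then (-1) * A x + 1 * B x else 0) = f"
    using assms(3,4) by auto
  ultimately show ?thesis by simp
qed

lemma in_p_pbr:
  assumes "in_p X" "in_p Y" shows "in_p (pbr X Y)"
proof -
  obtain U1 S1 T1 where X: "X = (U1,S1,T1)" by (cases X) auto
  obtain U2 S2 T2 where Y: "Y = (U2,S2,T2)" by (cases Y) auto
  have A: "\<And>j. smooth_D (\<lambda>y. U1 y $ j)" "smooth_D S1" "smooth_D T1" "\<And>x. norm x = 1 \<Longrightarrow> x \<bullet> U1 x = 0"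
    using assms(1) unfolding X in_p_def by auto
  have B: "\<And>j. smooth_D (\<lambda>y. U2 y $ j)" "smooth_D S2" "smooth_D T2" "\<And>x. norm x = 1 \<Longrightarrow> x \<bullet> U2 x = 0"
    using assms(2) unfolding Y in_p_def by auto
  define PU where "PU = (\<lambda>x. if x \<in> D then - vbr U1 U2 x else 0)"
  define PS where "PS = (\<lambda>x. if x \<in> D then - (lieD U1 S2 x - lieD U2 S1 x) else 0)"
  define PT where "PT = (\<lambda>x. if x \<in> D then - (lieD U1 T2 x - lieD U2 T1 x) else 0)"
  have P: "pbr X Y = (PU, PS, PT)" unfolding X Y pbr_def PU_def PS_def PT_def by simp
  have C1: "\<forall>j. smooth_D (\<lambda>x. PU x $ j)"
  proof
    fix j
    show "smooth_D (\<lambda>x. PU x $ j)"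
    proof (rule smoothD_from_ext[OF lie_ext[OF B(1) A(1)] lie_ext[OF A(1) B(1)]])
      fix x :: pt assume x: "x \<in> D"
      show "PU x $ j = - dD (\<lambda>y. U2 y $ j) x (U1 x) + dD (\<lambda>y. U1 y $ j) x (U2 x)"
        using x U_deriv(2)[OF A(1) x] U_deriv(2)[OF B(1) x] by (simp add: PU_def vbr_def)
    next
      fix x :: pt assume "x \<notin> D" then show "PU x $ j = 0" by (simp add: PU_def)
    qed
  qed
  have C2: "smooth_D PS"
    by (rule smoothD_from_ext[OF lie_ext[OF B(2) A(1)] lie_ext[OF A(2) B(1)]])
       (auto simp: PS_def lieD_def)
  have C3: "smooth_D PT"
    by (rule smoothD_from_ext[OF lie_ext[OF B(3) A(1)] lie_ext[OF A(3) B(1)]])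
       (auto simp: PT_def lieD_def)
  have C4: "\<forall>x. norm x = 1 \<longrightarrow> x \<bullet> PU x = 0"
  proof (intro allI impI)
    fix x :: pt assume nx: "norm x = 1"
    then have xD: "x \<in> D" by (simp add: D_def)
    have "x \<bullet> dD U2 x (U1 x) = - (U1 x \<bullet> U2 x)" by (rule tang[OF B(1) B(4) nx A(4)[OF nx]])
    moreover have "x \<bullet> dD U1 x (U2 x) = - (U2 x \<bullet> U1 x)" by (rule tang[OF A(1) A(4) nx B(4)[OF nx]])
    ultimately show "x \<bullet> PU x = 0" using xD by (simp add: PU_def vbr_def inner_diff_right inner_commute)
  qed
  show ?thesis unfolding P in_p_def prod.case using C1 C2 C3 C4 by (intro conjI)
qed

lemma dec_subseq:
  fixes a :: "nat \<Rightarrow> real"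
  assumes pos: "\<And>n. a n > 0" and lim: "a \<longlonglongrightarrow> 0"
  shows "\<exists>r::nat\<Rightarrow>nat. strict_mono r \<and> strict_mono (\<lambda>n. - a (r n))"
proof -
  have ex: "\<exists>k>m. a k < a m" for m
  proof -
    have "eventually (\<lambda>k. a k < a m) sequentially"
      using lim pos[of m] by (simp add: order_tendstoD(2))
    then obtain N where N: "\<And>k. k \<ge> N \<Longrightarrow> a k < a m" by (auto simp: eventually_sequentially)
    show ?thesis using N[of "max N (Suc m)"] by (intro exI[of _ "max N (Suc m)"]) auto
  qed
  define g where "g m = (SOME k. k > m \<and> a k < a m)" for m
  have g: "g m > m \<and> a (g m) < a m" for m unfolding g_def using someI_ex[OF ex[of m]] by blast
  define r where "r = rec_nat 0 (\<lambda>_ m. g m)"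
  have rS: "r (Suc n) = g (r n)" for n by (simp add: r_def)
  have "strict_mono r" unfolding strict_mono_Suc_iff using g rS by simp
  moreover have "strict_mono (\<lambda>n. - a (r n))" unfolding strict_mono_Suc_iff using g rS by simp
  ultimately show ?thesis by (intro exI[of _ r]) simp
qed

lemma dec_le: "strict_mono (\<lambda>n::nat. - t n :: real) \<Longrightarrow> m \<le> n \<Longrightarrow> t n \<le> t m"
  using strict_mono_less_eq[of "\<lambda>n. - t n" m n] by simp

lemma dec_less: "strict_mono (\<lambda>n::nat. - t n :: real) \<Longrightarrow> m < n \<Longrightarrow> t n < t m"
  using strict_monoD[of "\<lambda>n. - t n" m n] by simp

lemma isolated_pt:
  fixes t :: "nat \<Rightarrow> real"
  assumes dec: "strict_mono (\<lambda>n. - t n)" and pos: "\<And>n. t n > 0"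
  shows "at (t n) within insert 0 (range t) = bot"
proof -
  define e where "e = min (t n - t (Suc n)) (if n = 0 then 1 else t (n - 1) - t n)"
  have e: "e > 0" unfolding e_def using dec_less[OF dec] by auto
  have "\<not> t n islimpt insert 0 (range t)"
    unfolding islimpt_approachable
  proof
    assume H: "\<forall>e>0. \<exists>x'\<in>insert 0 (range t). x' \<noteq> t n \<and> dist x' (t n) < e"
    then obtain x' where x': "x' \<in> insert 0 (range t)" "x' \<noteq> t n" "dist x' (t n) < e" using e by blast
    have e1: "e \<le> t n - t (Suc n)" unfolding e_def by simp
    show False
    proof (cases "x' = 0")
      case True then show ?thesis using x' e1 pos[of "Suc n"] by (simp add: dist_real_def)
    next
      case False
      then obtain m where m: "x' = t m" using x' by auto
      then have mn: "m \<noteq> n" using x' by auto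
      show ?thesis
      proof (cases "m > n")
        case True
        then have "t m \<le> t (Suc n)" using dec_le[OF dec] by simp
        then show ?thesis using x' m e1 dec_less[OF dec, of n m] True by (simp add: dist_real_def)
      next
        case False
        then have mn': "m \<le> n - 1" "n \<noteq> 0" using mn by auto
        then have "t (n - 1) \<le> t m" using dec_le[OF dec] by simp
        moreover have "e \<le> t (n - 1) - t n" unfolding e_def using mn' by simp
        ultimately show ?thesis using x' m dec_less[OF dec, of m n] mn' by (simp add: dist_real_def)
      qed
    qed
  qed
  then show ?thesis using trivial_limit_within by blast
qed

lemma within_from_seq:
  fixes t :: "nat \<Rightarrow> real" and g :: "real \<Rightarrow> 'b::metric_space"
  assumes dec: "strict_mono (\<lambda>n. - t n)" and pos: "\<And>n. t n > 0"
    and lim: "(\<lambda>n. g (t n)) \<longlonglongrightarrow> l"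
  shows "(g \<longlongrightarrow> l) (at 0 within insert 0 (range t))"
  unfolding tendsto_iff
proof (intro allI impI)
  fix \<epsilon> :: real assume "\<epsilon> > 0"
  then obtain N where N: "\<And>n. n \<ge> N \<Longrightarrow> dist (g (t n)) l < \<epsilon>"
    using lim unfolding tendsto_iff eventually_sequentially by blast
  show "eventually (\<lambda>x. dist (g x) l < \<epsilon>) (at 0 within insert 0 (range t))"
    unfolding eventually_at
  proof (intro exI[of _ "t N"] conjI ballI impI)
    show "t N > 0" by (rule pos)
    fix x assume x: "x \<in> insert 0 (range t)" "x \<noteq> 0 \<and> dist x 0 < t N"
    then obtain n where n: "x = t n" by auto
    have "n \<ge> N"
    proof (rule ccontr)
      assume "\<not> n \<ge> N"
      then have "t N < t n" using dec_less[OF dec] by simp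
      then show False using x n pos[of n] by (simp add: dist_real_def)
    qed
    then show "dist (g x) l < \<epsilon>" using N n by simp
  qed
qed

lemma seq_from_within:
  fixes t :: "nat \<Rightarrow> real" and g :: "real \<Rightarrow> 'b::topological_space"
  assumes pos: "\<And>n. t n > 0" and t0: "t \<longlonglongrightarrow> 0"
    and lim: "(g \<longlongrightarrow> l) (at 0 within insert 0 (range t))"
  shows "(\<lambda>n. g (t n)) \<longlonglongrightarrow> l"
proof -
  have "filterlim t (at 0 within insert 0 (range t)) sequentially"
  proof -
    have "\<forall>n. t n \<in> insert 0 (range t) \<and> t n \<noteq> 0" using pos by (metis less_irrefl rangeI insertI2)
    then show ?thesis unfolding filterlim_at using t0 by (auto intro!: always_eventually)
  qed
  from filterlim_compose[OF lim this] show ?thesis .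
qed

lemma pstar_zero: "in_pstar (\<lambda>X. 0)" unfolding in_pstar_def by simp

lemma deriv_bot: "(f has_field_derivative (c::real)) bot"
  by (simp add: has_field_derivative_def has_derivative_def bounded_linear_mult_right)

lemma hadamard:
  fixes \<Phi> \<Phi>' :: "pt \<Rightarrow> pstar" and T :: "pt set"
  assumes hF: "has_fderiv F dF" and x0: "x0 \<in> T"
    and inT: "\<And>v. in_pstar (\<Phi> v)"
    and inT': "\<And>w. in_pstar (\<Phi>' w)"
    and dPhi: "\<And>X. in_p X \<Longrightarrow> ((\<lambda>v. \<Phi> v X) has_derivative (\<lambda>w. \<Phi>' w X)) (at x0 within T)"
  shows "((\<lambda>v. F (\<Phi> v)) has_derivative (\<lambda>w. \<Phi>' w (dF (\<Phi> x0)))) (at x0 within T)"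
proof -
  define X0 where "X0 = dF (\<Phi> x0)"
  have X0: "in_p X0" using hF inT unfolding has_fderiv_def X0_def by blast
  define L where "L = (\<lambda>w. \<Phi>' w X0)"
  have bl: "bounded_linear L" unfolding L_def using dPhi[OF X0] has_derivative_bounded_linear by blast
  define f where "f = (\<lambda>v. F (\<Phi> v))"
  define R where "R = (\<lambda>y. (1 / norm (y - x0)) *\<^sub>R (f y - (f x0 + L (y - x0))))"
  have "(R \<longlongrightarrow> 0) (at x0 within T)"
  proof (rule Lim_within_LIMSEQ, intro allI impI)
    fix v :: "nat \<Rightarrow> pt"
    assume v: "(\<forall>n. v n \<noteq> x0 \<and> v n \<in> T) \<and> v \<longlonglongrightarrow> x0"
    show "(\<lambda>n. R (v n)) \<longlonglongrightarrow> 0"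
    proof (rule ccontr)
      assume nc: "\<not> (\<lambda>n. R (v n)) \<longlonglongrightarrow> 0"
      then obtain e where e: "e > 0" "\<forall>N. \<exists>n\<ge>N. \<not> dist (R (v n)) 0 < e"
        unfolding LIMSEQ_def by blast
      then have "infinite {n. e \<le> \<bar>R (v n)\<bar>}"
        unfolding infinite_nat_iff_unbounded_le by (auto simp: dist_real_def not_less)
      then obtain r1 :: "nat \<Rightarrow> nat" where r1: "strict_mono r1" "\<And>n. e \<le> \<bar>R (v (r1 n))\<bar>"
        using infinite_enumerate by blast
      define v1 where "v1 = v \<circ> r1"
      have v1: "v1 \<longlonglongrightarrow> x0" unfolding v1_def using LIMSEQ_subseq_LIMSEQ v r1(1) by blast
      have a0: "(\<lambda>n. norm (v1 n - x0)) \<longlonglongrightarrow> 0"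
        using v1 by (simp add: LIM_zero tendsto_norm_zero)
      have apos: "\<And>n. norm (v1 n - x0) > 0" using v by (simp add: v1_def)
      obtain r2 :: "nat \<Rightarrow> nat" where r2: "strict_mono r2" "strict_mono (\<lambda>n. - norm (v1 (r2 n) - x0))"
        using dec_subseq[OF apos a0] by blast
      define v2 where "v2 = v1 \<circ> r2"
      have "\<forall>n. (v2 n - x0) /\<^sub>R norm (v2 n - x0) \<in> sphere 0 1"
        using apos by (simp add: v2_def)
      then obtain u r3 where r3: "u \<in> sphere 0 1" "strict_mono (r3 :: nat \<Rightarrow> nat)"
        "((\<lambda>n. (v2 n - x0) /\<^sub>R norm (v2 n - x0)) \<circ> r3) \<longlonglongrightarrow> u"
        by (rule seq_compactE[OF compact_imp_seq_compact[OF compact_sphere]])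
      define y where "y = v2 \<circ> r3"
      define t where "t = (\<lambda>n. norm (y n - x0))"
      have yT: "\<And>n. y n \<in> T" and yx: "\<And>n. y n \<noteq> x0" using v by (auto simp: y_def v2_def v1_def)
      have ylim: "y \<longlonglongrightarrow> x0" unfolding y_def v2_def
        using LIMSEQ_subseq_LIMSEQ[OF LIMSEQ_subseq_LIMSEQ[OF v1 r2(1)] r3(2)] by (simp add: comp_assoc)
      have Rge: "\<And>n. e \<le> \<bar>R (y n)\<bar>" using r1(2) by (simp add: y_def v2_def v1_def)
      have tpos: "\<And>n. t n > 0" using yx by (simp add: t_def)
      have t0: "t \<longlonglongrightarrow> 0" unfolding t_def using ylim by (simp add: LIM_zero tendsto_norm_zero)
      have tdec: "strict_mono (\<lambda>n. - t n)"
        unfolding t_def y_def v2_def comp_def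
        using strict_monoD[OF r2(2)] strict_monoD[OF r3(2)] by (auto simp: strict_mono_def)
      have ulim: "(\<lambda>n. (y n - x0) /\<^sub>R t n) \<longlonglongrightarrow> u" using r3(3) by (simp add: t_def y_def comp_def)
      have tinj: "inj t"
      proof (rule injI)
        fix m n assume "t m = t n"
        then show "m = n" using dec_less[OF tdec, of m n] dec_less[OF tdec, of n m]
          by (cases m n rule: linorder_cases) auto
      qed
      define I where "I = insert 0 (range t)"
      define \<gamma> where "\<gamma> = (\<lambda>\<nu>. if \<nu> \<in> range t then y (inv t \<nu>) else x0)"
      define c where "c = (\<lambda>\<nu>. \<Phi> (\<gamma> \<nu>))"
      define c' where "c' = (\<lambda>\<nu>::real. if \<nu> = 0 then \<Phi>' u else (\<lambda>X. 0))"
      have ct: "\<And>n. c (t n) = \<Phi> (y n)" unfolding c_def \<gamma>_def using tinj by simp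
      have z: "0 \<notin> range t" using tpos by (metis less_irrefl rangeE)
      have c0: "c 0 = \<Phi> x0" unfolding c_def \<gamma>_def using z by simp
      have wc: "wcurve I c c'"
        unfolding wcurve_def
      proof (intro conjI ballI allI impI)
        fix \<mu> assume "\<mu> \<in> I"
        show "in_pstar (c \<mu>)" unfolding c_def by (rule inT)
        show "in_pstar (c' \<mu>)" unfolding c'_def using inT' pstar_zero by simp
      next
        fix \<mu> X assume mu: "\<mu> \<in> I" and X: "in_p X"
        show "((\<lambda>\<nu>. c \<nu> X) has_real_derivative c' \<mu> X) (at \<mu> within I)"
        proof (cases "\<mu> = 0")
          case False
          then obtain n where "\<mu> = t n" using mu by (auto simp: I_def)
          then have "at \<mu> within I = bot" using isolated_pt[OF tdec tpos] by (simp add: I_def)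
          then show ?thesis by (simp add: deriv_bot)
        next
          case True
          have dX: "((\<lambda>w. \<Phi> w X) has_derivative (\<lambda>w. \<Phi>' w X)) (at x0 within T)" using dPhi[OF X] .
          have blX: "bounded_linear (\<lambda>w. \<Phi>' w X)" using dX has_derivative_bounded_linear by blast
          have "((\<lambda>y. (1 / norm (y - x0)) *\<^sub>R (\<Phi> y X - (\<Phi> x0 X + \<Phi>' (y - x0) X))) \<longlongrightarrow> 0) (at x0 within T)"
            using dX unfolding has_derivative_within by blast
          moreover have "filterlim y (at x0 within T) sequentially"
            unfolding filterlim_at using yT yx ylim by (auto intro!: always_eventually)
          ultimately have A: "(\<lambda>n. (1 / t n) * (\<Phi> (y n) X - (\<Phi> x0 X + \<Phi>' (y n - x0) X))) \<longlonglongrightarrow> 0"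
            using filterlim_compose by (fastforce simp: t_def)
          have B: "(\<lambda>n. \<Phi>' ((y n - x0) /\<^sub>R t n) X) \<longlonglongrightarrow> \<Phi>' u X"
            using bounded_linear.tendsto[OF blX ulim] .
          have "(\<lambda>n. (1 / t n) * (\<Phi> (y n) X - (\<Phi> x0 X + \<Phi>' (y n - x0) X)) + \<Phi>' ((y n - x0) /\<^sub>R t n) X)
              \<longlonglongrightarrow> 0 + \<Phi>' u X"
            by (rule tendsto_add[OF A B])
          moreover have "(1 / t n) * (\<Phi> (y n) X - (\<Phi> x0 X + \<Phi>' (y n - x0) X)) + \<Phi>' ((y n - x0) /\<^sub>R t n) X
              = (c (t n) X - c 0 X) / (t n - 0)" for n
          proof -
            have "\<Phi>' ((y n - x0) /\<^sub>R t n) X = (1 / t n) * \<Phi>' (y n - x0) X"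
              using linear_cmul[OF bounded_linear.linear[OF blX]] by (simp add: divide_inverse)
            then show ?thesis using tpos[of n] by (simp add: ct c0 field_simps)
          qed
          ultimately have "(\<lambda>n. (c (t n) X - c 0 X) / (t n - 0)) \<longlonglongrightarrow> \<Phi>' u X" by simp
          then have "((\<lambda>\<nu>. (c \<nu> X - c 0 X) / (\<nu> - 0)) \<longlongrightarrow> \<Phi>' u X) (at 0 within I)"
            unfolding I_def by (rule within_from_seq[OF tdec tpos])
          then show ?thesis using True by (simp add: has_field_derivative_iff c'_def)
        qed
      qed
      have "0 \<in> I" by (simp add: I_def)
      then have "((\<lambda>\<nu>. F (c \<nu>)) has_real_derivative c' 0 (dF (c 0))) (at 0 within I)"
        using hF wc unfolding has_fderiv_def by blast
      then have "((\<lambda>\<nu>. (F (c \<nu>) - F (c 0)) / (\<nu> - 0)) \<longlongrightarrow> L u) (at 0 within I)"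
        by (simp add: has_field_derivative_iff c'_def c0 L_def X0_def)
      then have F1: "(\<lambda>n. (F (c (t n)) - F (c 0)) / (t n - 0)) \<longlonglongrightarrow> L u"
        unfolding I_def by (rule seq_from_within[OF tpos t0])
      have F2: "(\<lambda>n. L ((y n - x0) /\<^sub>R t n)) \<longlonglongrightarrow> L u"
        using bounded_linear.tendsto[OF bl ulim] .
      have "(\<lambda>n. (F (c (t n)) - F (c 0)) / (t n - 0) - L ((y n - x0) /\<^sub>R t n)) \<longlonglongrightarrow> L u - L u"
        by (rule tendsto_diff[OF F1 F2])
      moreover have "(F (c (t n)) - F (c 0)) / (t n - 0) - L ((y n - x0) /\<^sub>R t n) = R (y n)" for n
      proof -
        have e1: "L ((y n - x0) /\<^sub>R t n) = L (y n - x0) / t n"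
          using linear_cmul[OF bounded_linear.linear[OF bl], of "inverse (t n)" "y n - x0"]
          by (simp add: divide_inverse mult.commute)
        have e2: "R (y n) = (F (\<Phi> (y n)) - (F (\<Phi> x0) + L (y n - x0))) / t n"
          by (simp add: R_def f_def t_def divide_inverse mult.commute)
        show ?thesis unfolding e2 ct c0 e1 using tpos[of n] by (simp add: field_simps)
      qed
      ultimately have "(\<lambda>n. R (y n)) \<longlonglongrightarrow> 0" by simp
      then have "eventually (\<lambda>n. \<bar>R (y n)\<bar> < e) sequentially"
        using e(1) unfolding tendsto_iff by (auto simp: dist_real_def)
      then obtain N where "\<And>n. n \<ge> N \<Longrightarrow> \<bar>R (y n)\<bar> < e" unfolding eventually_sequentially by blast
      then show False using Rge[of N] by force
    qed
  qed
  then show ?thesis unfolding has_derivative_within R_def f_def L_def X0_def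
    using bl unfolding L_def X0_def by blast
qed

lemma gamma_pstar: "in_pstar (Gamma N WS WT q p s t)"
  unfolding in_pstar_def
proof (intro conjI allI impI)
  fix X Y :: pelem and a b :: real assume X: "in_p X" and Y: "in_p Y"
  obtain U1 S1 T1 where Xe: "X = (U1,S1,T1)" by (cases X) auto
  obtain U2 S2 T2 where Ye: "Y = (U2,S2,T2)" by (cases Y) auto
  have P: "plin a X b Y = ((\<lambda>x. a *\<^sub>R U1 x + b *\<^sub>R U2 x), (\<lambda>x. a * S1 x + b * S2 x), (\<lambda>x. a * T1 x + b * T2 x))"
    by (simp add: Xe Ye plin_def)
  have pl: "in_p (plin a X b Y)" using in_p_plin[OF X Y] .
  show "Gamma N WS WT q p s t (plin a X b Y) = a * Gamma N WS WT q p s t X + b * Gamma N WS WT q p s t Y"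
    using pl X Y unfolding Gamma_def P
    by (simp add: Xe Ye sum_distrib_left sum.distrib[symmetric] inner_add_right algebra_simps)
next
  fix X assume "\<not> in_p X" then show "Gamma N WS WT q p s t X = 0" by (simp add: Gamma_def)
qed

definition LQ :: "pt \<Rightarrow> pt \<Rightarrow> real \<Rightarrow> real \<Rightarrow> real \<Rightarrow> real \<Rightarrow> pt \<Rightarrow> pstar" where
  "LQ qq pp ss tt WS WT w X = (if in_p X then (case X of (U,S,T) \<Rightarrow>
      pp \<bullet> dD U qq w + WS * ss * dD S qq w + WT * tt * dD T qq w) else 0)"

definition LP :: "pt \<Rightarrow> pt \<Rightarrow> pstar" where
  "LP qq w X = (if in_p X then (case X of (U,S,T) \<Rightarrow> w \<bullet> U qq) else 0)"

lemma in_p_parts: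
  assumes "in_p (U,S,T)"
  shows "\<And>j. smooth_D (\<lambda>y. U y $ j)" "smooth_D S" "smooth_D T"
  using assms unfolding in_p_def by auto

lemma dD_lin_r:
  assumes x: "x \<in> D" and f: "smooth_D f" and g: "smooth_D g"
  shows "dD (\<lambda>y. a * f y + b * g y) x w = a * dD f x w + b * dD g x w"
proof -
  have "((\<lambda>y. a * f y + b * g y) has_derivative (\<lambda>w. a * dD f x w + b * dD g x w)) (at x within D)"
    using smoothD_deriv[OF f x] smoothD_deriv[OF g x] by (auto intro!: derivative_eq_intros)
  from dD_eq[OF x this] show ?thesis by simp
qed

lemma dD_lin_v:
  assumes x: "x \<in> D" and f: "\<And>j. smooth_D (\<lambda>y. U1 y $ j)" and g: "\<And>j. smooth_D (\<lambda>y. U2 y $ j)"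
  shows "dD (\<lambda>y. a *\<^sub>R U1 y + b *\<^sub>R U2 y) x w = a *\<^sub>R dD U1 x w + b *\<^sub>R dD U2 x w"
proof -
  have "((\<lambda>y. a *\<^sub>R U1 y + b *\<^sub>R U2 y) has_derivative (\<lambda>w. a *\<^sub>R dD U1 x w + b *\<^sub>R dD U2 x w)) (at x within D)"
    using U_deriv(1)[OF f x] U_deriv(1)[OF g x] by (auto intro!: derivative_eq_intros)
  from dD_eq[OF x this] show ?thesis by simp
qed

lemma LQ_pstar:
  assumes x: "qq \<in> D" shows "in_pstar (LQ qq pp ss tt WS WT w)"
  unfolding in_pstar_def
proof (intro conjI allI impI)
  fix X Y :: pelem and a b :: real assume X: "in_p X" and Y: "in_p Y"
  obtain U1 S1 T1 where Xe: "X = (U1,S1,T1)" by (cases X) auto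
  obtain U2 S2 T2 where Ye: "Y = (U2,S2,T2)" by (cases Y) auto
  have P: "plin a X b Y = ((\<lambda>x. a *\<^sub>R U1 x + b *\<^sub>R U2 x), (\<lambda>x. a * S1 x + b * S2 x), (\<lambda>x. a * T1 x + b * T2 x))"
    by (simp add: Xe Ye plin_def)
  have pl: "in_p (plin a X b Y)" using in_p_plin[OF X Y] .
  note A = in_p_parts[OF X[unfolded Xe]] and B = in_p_parts[OF Y[unfolded Ye]]
  show "LQ qq pp ss tt WS WT w (plin a X b Y) = a * LQ qq pp ss tt WS WT w X + b * LQ qq pp ss tt WS WT w Y"
    using pl X Y unfolding LQ_def P
    by (simp add: Xe Ye dD_lin_r[OF x A(2) B(2)] dD_lin_r[OF x A(3) B(3)] dD_lin_v[OF x A(1) B(1)]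
        inner_add_right algebra_simps)
next
  fix X assume "\<not> in_p X" then show "LQ qq pp ss tt WS WT w X = 0" by (simp add: LQ_def)
qed

lemma LP_pstar: "in_pstar (LP qq w)"
  unfolding in_pstar_def
proof (intro conjI allI impI)
  fix X Y :: pelem and a b :: real assume X: "in_p X" and Y: "in_p Y"
  obtain U1 S1 T1 where Xe: "X = (U1,S1,T1)" by (cases X) auto
  obtain U2 S2 T2 where Ye: "Y = (U2,S2,T2)" by (cases Y) auto
  have P: "plin a X b Y = ((\<lambda>x. a *\<^sub>R U1 x + b *\<^sub>R U2 x), (\<lambda>x. a * S1 x + b * S2 x), (\<lambda>x. a * T1 x + b * T2 x))"
    by (simp add: Xe Ye plin_def)
  have pl: "in_p (plin a X b Y)" using in_p_plin[OF X Y] .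
  show "LP qq w (plin a X b Y) = a * LP qq w X + b * LP qq w Y"
    using pl X Y unfolding LP_def P by (simp add: Xe Ye inner_add_right)
next
  fix X assume "\<not> in_p X" then show "LP qq w X = 0" by (simp add: LP_def)
qed

lemma gamma_q_deriv:
  assumes i: "i < N" and qq: "q i \<in> D" and X: "in_p X"
  shows "((\<lambda>v. Gamma N WS WT (q(i:=v)) p s t X) has_derivative (\<lambda>w. LQ (q i) (p i) (s i) (t i) WS WT w X)) (at (q i) within D)"
proof -
  obtain U S T where Xe: "X = (U,S,T)" by (cases X) auto
  note A = in_p_parts[OF X[unfolded Xe]]
  define trm where "trm = (\<lambda>k v. p k \<bullet> U ((q(i:=v)) k) + WS * s k * S ((q(i:=v)) k) + WT * t k * T ((q(i:=v)) k))"
  define Dk where "Dk = (\<lambda>k w. if k = i then p i \<bullet> dD U (q i) w + WS * s i * dD S (q i) w + WT * t i * dD T (q i) w else 0)"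
  have e1: "(\<lambda>v. Gamma N WS WT (q(i:=v)) p s t X) = (\<lambda>v. \<Sum>k<N. trm k v)"
    using X by (simp add: Gamma_def Xe trm_def)
  have "((\<lambda>v. trm k v) has_derivative Dk k) (at (q i) within D)" for k
  proof (cases "k = i")
    case True
    have "((\<lambda>v. p i \<bullet> U v + WS * s i * S v + WT * t i * T v) has_derivative
        (\<lambda>w. p i \<bullet> dD U (q i) w + WS * s i * dD S (q i) w + WT * t i * dD T (q i) w)) (at (q i) within D)"
      using U_deriv(1)[OF A(1) qq] smoothD_deriv[OF A(2) qq] smoothD_deriv[OF A(3) qq]
      by (auto intro!: derivative_eq_intros)
    then show ?thesis using True by (simp add: trm_def Dk_def)
  next
    case False
    then show ?thesis by (simp add: trm_def Dk_def)
  qed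
  then have "((\<lambda>v. \<Sum>k<N. trm k v) has_derivative (\<lambda>w. \<Sum>k<N. Dk k w)) (at (q i) within D)"
    by (intro has_derivative_sum) auto
  moreover have "(\<lambda>w. \<Sum>k<N. Dk k w) = (\<lambda>w. LQ (q i) (p i) (s i) (t i) WS WT w X)"
    using i X by (simp add: Dk_def LQ_def Xe)
  ultimately show ?thesis unfolding e1 by simp
qed

lemma gamma_p_deriv:
  assumes i: "i < N" and X: "in_p X"
  shows "((\<lambda>v. Gamma N WS WT q (p(i:=v)) s t X) has_derivative (\<lambda>w. LP (q i) w X)) (at (p i))"
proof -
  obtain U S T where Xe: "X = (U,S,T)" by (cases X) auto
  define trm where "trm = (\<lambda>k v. (p(i:=v)) k \<bullet> U (q k) + WS * s k * S (q k) + WT * t k * T (q k))"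
  define Dk where "Dk = (\<lambda>k w. if k = i then w \<bullet> U (q i) else 0)"
  have e1: "(\<lambda>v. Gamma N WS WT q (p(i:=v)) s t X) = (\<lambda>v. \<Sum>k<N. trm k v)"
    using X by (simp add: Gamma_def Xe trm_def)
  have "((\<lambda>v. trm k v) has_derivative Dk k) (at (p i))" for k
  proof (cases "k = i")
    case True
    have "((\<lambda>v. v \<bullet> U (q i) + WS * s i * S (q i) + WT * t i * T (q i)) has_derivative
        (\<lambda>w. w \<bullet> U (q i))) (at (p i))"
      by (auto intro!: derivative_eq_intros)
    then show ?thesis using True by (simp add: trm_def Dk_def)
  next
    case False
    then show ?thesis by (simp add: trm_def Dk_def)
  qed
  then have "((\<lambda>v. \<Sum>k<N. trm k v) has_derivative (\<lambda>w. \<Sum>k<N. Dk k w)) (at (p i))"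
    by (intro has_derivative_sum) auto
  moreover have "(\<lambda>w. \<Sum>k<N. Dk k w) = (\<lambda>w. LP (q i) w X)"
    using i X by (simp add: Dk_def LP_def Xe)
  ultimately show ?thesis unfolding e1 by simp
qed

lemma per_i:
  assumes hH: "has_fderiv H dH" and i: "i < N" and qi: "q i \<in> D"
  shows "((\<lambda>v. H (Gamma N WS WT (q(i:=v)) p s t)) has_derivative
           (\<lambda>w. LQ (q i) (p i) (s i) (t i) WS WT w (dH (Gamma N WS WT q p s t)))) (at (q i) within D)"
    and "((\<lambda>v. H (Gamma N WS WT q (p(i:=v)) s t)) has_derivative
           (\<lambda>w. LP (q i) w (dH (Gamma N WS WT q p s t)))) (at (p i))"
proof -
  have "((\<lambda>v. H (Gamma N WS WT (q(i:=v)) p s t)) has_derivative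
           (\<lambda>w. LQ (q i) (p i) (s i) (t i) WS WT w (dH (Gamma N WS WT (q(i := q i)) p s t)))) (at (q i) within D)"
    by (rule hadamard[OF hH qi gamma_pstar LQ_pstar[OF qi] gamma_q_deriv[where q=q and i=i, OF i qi]])
  then show "((\<lambda>v. H (Gamma N WS WT (q(i:=v)) p s t)) has_derivative
           (\<lambda>w. LQ (q i) (p i) (s i) (t i) WS WT w (dH (Gamma N WS WT q p s t)))) (at (q i) within D)"
    by simp
  have "((\<lambda>v. H (Gamma N WS WT q (p(i:=v)) s t)) has_derivative
           (\<lambda>w. LP (q i) w (dH (Gamma N WS WT q (p(i := p i)) s t)))) (at (p i) within UNIV)"
    by (rule hadamard[OF hH UNIV_I gamma_pstar LP_pstar gamma_p_deriv[OF i]])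
  then show "((\<lambda>v. H (Gamma N WS WT q (p(i:=v)) s t)) has_derivative
           (\<lambda>w. LP (q i) w (dH (Gamma N WS WT q p s t)))) (at (p i))"
    by simp
qed

lemma chi_inner:
  assumes "linear (L :: pt \<Rightarrow> real)"
  shows "(\<chi> j. L (axis j 1)) \<bullet> v = L v"
  unfolding lin_expand[OF assms, of v] inner_vec_def by (simp add: mult.commute)

lemma grads:
  assumes hH: "has_fderiv H dH" and i: "i < N" and qi: "q i \<in> D"
  shows "grad_q (\<lambda>q p s t. H (Gamma N WS WT q p s t)) i q p s t \<bullet> v
          = LQ (q i) (p i) (s i) (t i) WS WT v (dH (Gamma N WS WT q p s t))"
    and "grad_p (\<lambda>q p s t. H (Gamma N WS WT q p s t)) i q p s t
          = (case dH (Gamma N WS WT q p s t) of (U,S,T) \<Rightarrow> U (q i))"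
proof -
  note d1 = per_i(1)[where q=q and i=i and WS=WS and WT=WT and p=p and s=s and t=t, OF hH i qi]
  have fd1: "frechet_derivative (\<lambda>v. H (Gamma N WS WT (q(i:=v)) p s t)) (at (q i) within D)
      = (\<lambda>w. LQ (q i) (p i) (s i) (t i) WS WT w (dH (Gamma N WS WT q p s t)))"
    using D_unique[OF qi d1] frechet_derivative_works differentiableI[OF d1] by metis
  show "grad_q (\<lambda>q p s t. H (Gamma N WS WT q p s t)) i q p s t \<bullet> v
          = LQ (q i) (p i) (s i) (t i) WS WT v (dH (Gamma N WS WT q p s t))"
    unfolding grad_q_def fd1 by (rule chi_inner[OF has_derivative_linear[OF d1]])
  note d2 = per_i(2)[where q=q and i=i and WS=WS and WT=WT and p=p and s=s and t=t, OF hH i qi]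
  have fd2: "frechet_derivative (\<lambda>v. H (Gamma N WS WT q (p(i:=v)) s t)) (at (p i))
      = (\<lambda>w. LP (q i) w (dH (Gamma N WS WT q p s t)))"
    using frechet_derivative_at[OF d2] by simp
  have inp: "in_p (dH (Gamma N WS WT q p s t))" using hH gamma_pstar unfolding has_fderiv_def by blast
  obtain U S T where e: "dH (Gamma N WS WT q p s t) = (U,S,T)" by (cases "dH (Gamma N WS WT q p s t)") auto
  show "grad_p (\<lambda>q p s t. H (Gamma N WS WT q p s t)) i q p s t
          = (case dH (Gamma N WS WT q p s t) of (U,S,T) \<Rightarrow> U (q i))"
    unfolding grad_p_def fd2 using inp by (simp add: LP_def e vec_eq_iff inner_axis')
qed

theorem theorem5:
  fixes N :: nat and WS WT :: real
    and F G :: "pstar \<Rightarrow> real" and dF dG :: "pstar \<Rightarrow> pelem"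
    and q p :: "nat \<Rightarrow> real^2" and s t :: "nat \<Rightarrow> real"
  assumes "0 < N" and "WS \<noteq> 0" and "WT \<noteq> 0"
    and "has_fderiv F dF" and "has_fderiv G dG"
    and "\<forall>i<N. q i \<in> D"
  shows "in_pstar (Gamma N WS WT q p s t)
    \<and> phase_diff N (\<lambda>q p s t. F (Gamma N WS WT q p s t)) q p s t
    \<and> phase_diff N (\<lambda>q p s t. G (Gamma N WS WT q p s t)) q p s t
    \<and> phase_br N (\<lambda>q p s t. F (Gamma N WS WT q p s t)) (\<lambda>q p s t. G (Gamma N WS WT q p s t)) q p s t
      = lp_br dF dG (Gamma N WS WT q p s t)"
proof -
  note hF = assms(4) and hG = assms(5) and qD = assms(6)
  have pd: "phase_diff N (\<lambda>q p s t. H (Gamma N WS WT q p s t)) q p s t" if hH: "has_fderiv H dH" for H dH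
    unfolding phase_diff_def
  proof (intro allI impI conjI)
    fix i assume i: "i < N"
    then have qi: "q i \<in> D" using qD by blast
    show "(\<lambda>v. H (Gamma N WS WT (q(i := v)) p s t)) differentiable at (q i) within D"
      using per_i(1)[where q=q and i=i and WS=WS and WT=WT and p=p and s=s and t=t, OF hH i qi]
      by (rule differentiableI)
    show "(\<lambda>v. H (Gamma N WS WT q (p(i := v)) s t)) differentiable at (p i)"
      using per_i(2)[where q=q and i=i and WS=WS and WT=WT and p=p and s=s and t=t, OF hH i qi]
      by (rule differentiableI)
  qed
  define G0 where "G0 = Gamma N WS WT q p s t"
  have inF: "in_p (dF G0)" using hF gamma_pstar unfolding has_fderiv_def G0_def by blast
  have inG: "in_p (dG G0)" using hG gamma_pstar unfolding has_fderiv_def G0_def by blast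
  obtain UF SF TF where eF: "dF G0 = (UF,SF,TF)" by (cases "dF G0") auto
  obtain UG SG TG where eG: "dG G0 = (UG,SG,TG)" by (cases "dG G0") auto
  have inPB: "in_p (pbr (dF G0) (dG G0))" by (rule in_p_pbr[OF inF inG])
  have "phase_br N (\<lambda>q p s t. F (Gamma N WS WT q p s t)) (\<lambda>q p s t. G (Gamma N WS WT q p s t)) q p s t
      = (\<Sum>i<N. LQ (q i) (p i) (s i) (t i) WS WT (UG (q i)) (dF G0) - LQ (q i) (p i) (s i) (t i) WS WT (UF (q i)) (dG G0))"
    unfolding phase_br_def
  proof (rule sum.cong[OF refl])
    fix i assume "i \<in> {..<N}"
    then have i: "i < N" by simp
    then have qi: "q i \<in> D" using qD by blast
    have gpF: "grad_p (\<lambda>q p s t. F (Gamma N WS WT q p s t)) i q p s t = UF (q i)"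
      using grads(2)[where q=q and i=i and WS=WS and WT=WT and p=p and s=s and t=t, OF hF i qi] eF
      by (simp add: G0_def)
    have gpG: "grad_p (\<lambda>q p s t. G (Gamma N WS WT q p s t)) i q p s t = UG (q i)"
      using grads(2)[where q=q and i=i and WS=WS and WT=WT and p=p and s=s and t=t, OF hG i qi] eG
      by (simp add: G0_def)
    show "grad_q (\<lambda>q p s t. F (Gamma N WS WT q p s t)) i q p s t \<bullet> grad_p (\<lambda>q p s t. G (Gamma N WS WT q p s t)) i q p s t -
          grad_q (\<lambda>q p s t. G (Gamma N WS WT q p s t)) i q p s t \<bullet> grad_p (\<lambda>q p s t. F (Gamma N WS WT q p s t)) i q p s t =
          LQ (q i) (p i) (s i) (t i) WS WT (UG (q i)) (dF G0) - LQ (q i) (p i) (s i) (t i) WS WT (UF (q i)) (dG G0)"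
      unfolding gpF gpG G0_def
      using grads(1)[where q=q and i=i and WS=WS and WT=WT and p=p and s=s and t=t, OF hF i qi]
            grads(1)[where q=q and i=i and WS=WS and WT=WT and p=p and s=s and t=t, OF hG i qi]
      by simp
  qed
  also have "\<dots> = lp_br dF dG G0"
    unfolding lp_br_def
  proof -
    have "G0 (pbr (dF G0) (dG G0)) = (case pbr (dF G0) (dG G0) of (U, S, T) \<Rightarrow>
        \<Sum>i<N. p i \<bullet> U (q i) + WS * s i * S (q i) + WT * t i * T (q i))"
      using inPB by (simp add: G0_def Gamma_def)
    also have "\<dots> = (\<Sum>i<N. LQ (q i) (p i) (s i) (t i) WS WT (UG (q i)) (dF G0) - LQ (q i) (p i) (s i) (t i) WS WT (UF (q i)) (dG G0))"
      unfolding eF eG pbr_def prod.case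
    proof (rule sum.cong[OF refl])
      fix i assume "i \<in> {..<N}"
      then have "q i \<in> D" using qD by blast
      then show "p i \<bullet> (if q i \<in> D then - vbr UF UG (q i) else 0) +
          WS * s i * (if q i \<in> D then - (lieD UF SG (q i) - lieD UG SF (q i)) else 0) +
          WT * t i * (if q i \<in> D then - (lieD UF TG (q i) - lieD UG TF (q i)) else 0) =
          LQ (q i) (p i) (s i) (t i) WS WT (UG (q i)) (UF, SF, TF) - LQ (q i) (p i) (s i) (t i) WS WT (UF (q i)) (UG, SG, TG)"
        using inF inG unfolding eF eG
        by (simp add: LQ_def vbr_def lieD_def inner_diff_right algebra_simps)
    qed
    finally show "(\<Sum>i<N. LQ (q i) (p i) (s i) (t i) WS WT (UG (q i)) (dF G0) - LQ (q i) (p i) (s i) (t i) WS WT (UF (q i)) (dG G0))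
       = G0 (pbr (dF G0) (dG G0))" by simp
  qed
  finally show ?thesis using gamma_pstar pd[OF hF] pd[OF hG] by (simp add: G0_def)
qed

end
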